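(* Let $(Y_j)_{j\in\mathbb Z}$ be a process such that, for all integers $s<t$ and all $\tau>0$, the law of $\tau^{-1}\mathbb X_n^{r_n+s,r_n+t}$ conditioned on $\|\mathbf X_{r_n}\|>u_n(\tau)$ converges to the law of $(Y_j)_{s\le j<t}$. Then $\|Y_0\|$ is uniformly distributed on $[0,1]$.
   Context: $\mathbf X_0,\mathbf X_1,\dots$ is a stationary sequence in $\mathbb R^d$. Thresholds $u_n:(0,\infty)\to(0,\infty)$ nonincreasing, left-continuous, with $\lim_{\tau_1\to0,\tau_2\to\infty}\mathbb P(u_n(\tau_2)<\|\mathbf X_0\|<u_n(\tau_1))=1$ and $\lim_nn\mathbb P(\|\mathbf X_0\|>u_n(\tau))=\tau$ for all $\tau>0$; $u_n^{-1}(z)=\sup\{\tau>0:z\le u_n(\tau)\}$. $r_n\to\infty$ is an integer sequence. $\mathbb X_n^{i,j}=(u_n^{-1}(\|\mathbf X_m\|)\mathbf X_m/\|\mathbf X_m\|)_{m=i}^{j-1}$. *)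

theory Defs
  imports "HOL-Probability.Probability"
begin

definition uinv :: "(real \<Rightarrow> real) \<Rightarrow> real \<Rightarrow> real" where
  "uinv v z = Sup {\<tau>. \<tau> > 0 \<and> z \<le> v \<tau>}"

definition tX :: "(nat \<Rightarrow> real \<Rightarrow> real) \<Rightarrow> (nat \<Rightarrow> 'b \<Rightarrow> real^'d) \<Rightarrow> nat \<Rightarrow> int \<Rightarrow> 'b \<Rightarrow> real^'d" where
  "tX u X n m \<omega> = (uinv (u n) (norm (X (nat m) \<omega>)) / norm (X (nat m) \<omega>)) *\<^sub>R X (nat m) \<omega>"

text \<open>The block X_n^{i,j} = (tX_m)_{m=i}^{j-1}, as a function of the absolute time index m,
  set to 0 outside {i..<j}.\<close>
definition Xblock :: "(nat \<Rightarrow> real \<Rightarrow> real) \<Rightarrow> (nat \<Rightarrow> 'b \<Rightarrow> real^'d) \<Rightarrow> nat \<Rightarrow> int \<Rightarrow> int \<Rightarrow> 'b \<Rightarrow> int \<Rightarrow> real^'d" where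
  "Xblock u X n i j \<omega> = (\<lambda>m. if i \<le> m \<and> m < j then tX u X n m \<omega> else 0)"

definition stationary :: "'b measure \<Rightarrow> (nat \<Rightarrow> 'b \<Rightarrow> real^'d) \<Rightarrow> bool" where
  "stationary M X \<longleftrightarrow> (\<forall>k. distr M (PiM UNIV (\<lambda>_. borel)) (\<lambda>\<omega> i. X (i + k) \<omega>)
                              = distr M (PiM UNIV (\<lambda>_. borel)) (\<lambda>\<omega> i. X i \<omega>))"

definition conv_in_law :: "(nat \<Rightarrow> 'a::topological_space measure) \<Rightarrow> 'a measure \<Rightarrow> bool" where
  "conv_in_law \<mu> \<nu> \<longleftrightarrow> (\<forall>f :: 'a \<Rightarrow> real. continuous_on UNIV f \<and> bounded (range f) \<longrightarrow>
      (\<lambda>n. \<integral>x. f x \<partial>\<mu> n) \<longlonglongrightarrow> (\<integral>x. f x \<partial>\<nu>))"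

end

theory Submission
  imports Defs
begin
lemma uinv_meas:
  fixes v :: "real \<Rightarrow> real"
  assumes anti: "\<And>t1 t2. 0 < t1 \<Longrightarrow> t1 \<le> t2 \<Longrightarrow> v t2 \<le> v t1"
  shows "uinv v \<in> borel_measurable borel"
proof -
  define R where "R a z = (\<forall>t. t > max a 0 \<longrightarrow> v t < z)" for a z
  define K2 where "K2 z = (\<forall>t>0. z \<le> v t)" for z
  have Rq: "R a = (\<lambda>z. \<forall>q::rat. max a 0 < of_rat q \<longrightarrow> v (of_rat q) < z)" for a
  proof (intro ext iffI)
    fix z assume H: "\<forall>q::rat. max a 0 < of_rat q \<longrightarrow> v (of_rat q) < z"
    show "R a z" unfolding R_def
    proof (intro allI impI)
      fix t assume t: "max a 0 < t"
      obtain r where r: "r \<in> \<rat>" "max a 0 < r" "r < t" using Rats_dense_in_real[OF t] by blast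
      then obtain q where q: "r = of_rat q" using Rats_cases by blast
      have "v t \<le> v r" using anti[of r t] r by auto
      also have "v r < z" using H r q by auto
      finally show "v t < z" .
    qed
  qed (auto simp: R_def)
  have K2q: "K2 = (\<lambda>z. \<forall>q::rat. (0::real) < of_rat q \<longrightarrow> z \<le> v (of_rat q))"
  proof (intro ext iffI)
    fix z assume H: "\<forall>q::rat. (0::real) < of_rat q \<longrightarrow> z \<le> v (of_rat q)"
    show "K2 z" unfolding K2_def
    proof (intro allI impI)
      fix t :: real assume t: "0 < t"
      have "t < t + 1" by simp
      obtain r where r: "r \<in> \<rat>" "t < r" "r < t + 1" using Rats_dense_in_real[OF \<open>t < t+1\<close>] by blast
      then obtain q where q: "r = of_rat q" using Rats_cases by blast
      have "0 < r" using r t by linarith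
      then have "z \<le> v r" using H q by metis
      also have "v r \<le> v t" using anti[of t r] r t by auto
      finally show "z \<le> v t" .
    qed
  qed (auto simp: K2_def)
  have mR[measurable]: "Measurable.pred borel (R a)" for a unfolding Rq by measurable
  have mK[measurable]: "Measurable.pred borel K2" unfolding K2q by measurable
  show ?thesis
  proof (subst borel_measurable_iff_le, intro allI)
    fix a
    have "{w \<in> space borel. uinv v w \<le> a} =
      {z \<in> space borel. (R 0 z \<and> Sup ({}::real set) \<le> a) \<or> (K2 z \<and> Sup {t::real. 0 < t} \<le> a) \<or> (\<not> R 0 z \<and> \<not> K2 z \<and> R a z)}"
    proof (intro set_eqI iffI)
      fix z
      define S where "S = {\<tau>. \<tau> > 0 \<and> z \<le> v \<tau>}"
      have u: "uinv v z = Sup S" unfolding uinv_def S_def ..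
      have c1: "R 0 z \<Longrightarrow> S = {}" unfolding R_def S_def by force
      have c2: "K2 z \<Longrightarrow> S = {t. 0 < t}" unfolding K2_def S_def by force
      have c3: "uinv v z \<le> a \<longleftrightarrow> R a z" if n1: "\<not> R 0 z" and n2: "\<not> K2 z"
      proof -
        have ne: "S \<noteq> {}" using n1 unfolding R_def S_def by force
        obtain t0 where t0: "t0 > 0" "v t0 < z" using n2 unfolding K2_def by force
        have bd: "bdd_above S"
        proof (rule bdd_aboveI[of _ t0])
          fix t assume "t \<in> S"
          then show "t \<le> t0" using anti[of t0 t] t0 unfolding S_def by force
        qed
        have "uinv v z \<le> a \<longleftrightarrow> (\<forall>x\<in>S. x \<le> a)" unfolding u using cSup_le_iff[OF ne bd] .
        also have "\<dots> \<longleftrightarrow> R a z" unfolding S_def R_def by (auto simp: not_less) (meson not_less)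
        finally show ?thesis .
      qed
      show "z \<in> {w \<in> space borel. uinv v w \<le> a} \<Longrightarrow> z \<in> {z \<in> space borel. (R 0 z \<and> Sup ({}::real set) \<le> a) \<or> (K2 z \<and> Sup {t::real. 0 < t} \<le> a) \<or> (\<not> R 0 z \<and> \<not> K2 z \<and> R a z)}"
        using c1 c2 c3 u by (cases "R 0 z"; cases "K2 z") (auto dest: spec[where x=1])
      show "z \<in> {z \<in> space borel. (R 0 z \<and> Sup ({}::real set) \<le> a) \<or> (K2 z \<and> Sup {t::real. 0 < t} \<le> a) \<or> (\<not> R 0 z \<and> \<not> K2 z \<and> R a z)} \<Longrightarrow> z \<in> {w \<in> space borel. uinv v w \<le> a}"
        using c1 c2 c3 u by (cases "R 0 z"; cases "K2 z") (auto dest: spec[where x=1])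
    qed
    also have "\<dots> \<in> sets borel" by measurable
    finally show "{w \<in> space borel. uinv v w \<le> a} \<in> sets borel" .
  qed
qed

lemma uinv_key:
  fixes v :: "real \<Rightarrow> real"
  assumes anti: "\<And>t1 t2. 0 < t1 \<Longrightarrow> t1 \<le> t2 \<Longrightarrow> v t2 \<le> v t1"
    and lc: "\<And>\<tau>. \<tau> > 0 \<Longrightarrow> continuous (at_left \<tau>) v"
    and z: "v 1 < z" and d: "\<delta> > 0"
  shows "v \<delta> < z \<or> (0 < uinv v z \<and> uinv v z < 1 \<and> (\<forall>y>0. y \<le> uinv v z \<longleftrightarrow> z \<le> v y))"
proof (cases "v \<delta> < z")
  case False
  define S where "S = {\<tau>. \<tau> > 0 \<and> z \<le> v \<tau>}"
  have u: "uinv v z = Sup S" unfolding uinv_def S_def ..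
  have dS: "\<delta> \<in> S" using False d unfolding S_def by auto
  have S1: "t < 1" if "t \<in> S" for t
  proof (rule ccontr)
    assume "\<not> t < 1"
    then have "v t \<le> v 1" using anti[of 1 t] by auto
    then show False using that z unfolding S_def by auto
  qed
  have bd: "bdd_above S" using S1 by (meson bdd_aboveI less_imp_le)
  have ne: "S \<noteq> {}" using dS by auto
  define a where "a = Sup S"
  have da: "\<delta> \<le> a" unfolding a_def using cSup_upper[OF dS bd] .
  then have a0: "a > 0" using d by linarith
  have aS: "a \<in> S"
  proof -
    have lim: "(v \<longlongrightarrow> v a) (at_left a)" using lc[OF a0] by (simp add: continuous_within)
    have ev: "eventually (\<lambda>t. z \<le> v t) (at_left a)"
      using eventually_at_left_real[OF a0]
    proof (rule eventually_mono)
      fix t assume t: "t \<in> {0<..<a}"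
      then obtain s where s: "s \<in> S" "t < s" using less_cSup_iff[OF ne bd] unfolding a_def by auto
      have "v s \<le> v t" using anti[of t s] t s by auto
      then show "z \<le> v t" using s unfolding S_def by auto
    qed
    have "z \<le> v a" by (rule tendsto_lowerbound[OF lim ev]) simp
    then show ?thesis using a0 unfolding S_def by auto
  qed
  have "a < 1" using S1[OF aS] .
  moreover have "(\<forall>y>0. y \<le> a \<longleftrightarrow> z \<le> v y)"
  proof (intro allI impI iffI)
    fix y :: real assume y: "y > 0" "y \<le> a"
    then have "v a \<le> v y" using anti by auto
    then show "z \<le> v y" using aS unfolding S_def by auto
  next
    fix y :: real assume y: "y > 0" "z \<le> v y"
    then have "y \<in> S" unfolding S_def by auto
    then show "y \<le> a" unfolding a_def using cSup_upper[OF _ bd] by auto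
  qed
  ultimately show ?thesis using a0 u a_def by auto
qed auto

theorem lemma3p3:
  fixes M :: "'b measure" and X :: "nat \<Rightarrow> 'b \<Rightarrow> real^'d"
    and u :: "nat \<Rightarrow> real \<Rightarrow> real" and r :: "nat \<Rightarrow> nat"
    and N :: "'c measure" and Y :: "int \<Rightarrow> 'c \<Rightarrow> real^'d"
  assumes M: "prob_space M"
    and X_meas: "\<And>m. X m \<in> borel_measurable M"
    and stat: "stationary M X"
    and u_pos: "\<And>n \<tau>. \<tau> > 0 \<Longrightarrow> u n \<tau> > 0"
    and u_mono: "\<And>n \<tau>1 \<tau>2. 0 < \<tau>1 \<Longrightarrow> \<tau>1 \<le> \<tau>2 \<Longrightarrow> u n \<tau>2 \<le> u n \<tau>1"
    and u_leftcont: "\<And>n \<tau>. \<tau> > 0 \<Longrightarrow> continuous (at_left \<tau>) (u n)"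
    and u_range: "\<And>n. ((\<lambda>(\<tau>1, \<tau>2). measure M {\<omega> \<in> space M. u n \<tau>2 < norm (X 0 \<omega>) \<and> norm (X 0 \<omega>) < u n \<tau>1})
                        \<longlongrightarrow> 1) (at_right 0 \<times>\<^sub>F at_top)"
    and u_tail: "\<And>\<tau>. \<tau> > 0 \<Longrightarrow>
                   (\<lambda>n. real n * measure M {\<omega> \<in> space M. norm (X 0 \<omega>) > u n \<tau>}) \<longlonglongrightarrow> \<tau>"
    and r_lim: "filterlim r at_top sequentially"
    and N: "prob_space N"
    and Y_meas: "\<And>j. Y j \<in> borel_measurable N"
    and conv: "\<And>s t \<tau>. s < t \<Longrightarrow> \<tau> > 0 \<Longrightarrow>
       conv_in_law
         (\<lambda>n. distr (uniform_measure M {\<omega> \<in> space M. norm (X (r n) \<omega>) > u n \<tau>}) borel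
                 (\<lambda>\<omega> j. (1 / \<tau>) *\<^sub>R Xblock u X n (int (r n) + s) (int (r n) + t) \<omega> (int (r n) + j)))
         (distr N borel (\<lambda>\<omega> j. if s \<le> j \<and> j < t then Y j \<omega> else 0))"
  shows "distr N borel (\<lambda>\<omega>. norm (Y 0 \<omega>)) = uniform_measure lborel {0..1}"
proof -
  interpret M: prob_space M by (rule M)
  interpret N: prob_space N by (rule N)
  note [measurable] = X_meas Y_meas
  define U where "U = uniform_measure lborel {0..(1::real)}"
  have uinvm[measurable]: "uinv (u n) \<in> borel_measurable borel" for n
    using uinv_meas[of "u n"] u_mono by blast
  define W where "W n \<omega> = norm (tX u X n (int (r n)) \<omega>)" for n \<omega>
  have Wm[measurable]: "W n \<in> borel_measurable M" for n
    unfolding W_def tX_def by measurable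
  define E where "E n = {\<omega> \<in> space M. u n 1 < norm (X (r n) \<omega>)}" for n
  define P where "P n y = measure M {\<omega> \<in> space M. u n y < norm (X (r n) \<omega>)}" for n y
  have Em[measurable]: "E n \<in> sets M" for n unfolding E_def by measurable
  have PE: "P n 1 = measure M (E n)" for n unfolding P_def E_def ..
  have stat': "P n y = measure M {\<omega> \<in> space M. u n y < norm (X 0 \<omega>)}" for n y
  proof -
    let ?Q = "Pi\<^sub>M UNIV (\<lambda>_::nat. (borel :: (real^'d) measure))"
    have e: "distr M ?Q (\<lambda>\<omega> i. X (i + r n) \<omega>) = distr M ?Q (\<lambda>\<omega> i. X i \<omega>)"
      using stat unfolding stationary_def by blast
    have A: "{g :: nat \<Rightarrow> real^'d. u n y < norm (g 0)} \<inter> space ?Q \<in> sets ?Q" by measurable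
    have m1: "(\<lambda>\<omega> i. X (i + r n) \<omega>) \<in> measurable M ?Q" by (rule measurable_PiM_single') auto
    have m2: "(\<lambda>\<omega> i. X i \<omega>) \<in> measurable M ?Q" by (rule measurable_PiM_single') auto
    have "P n y = measure (distr M ?Q (\<lambda>\<omega> i. X (i + r n) \<omega>)) ({g. u n y < norm (g 0)} \<inter> space ?Q)"
      unfolding P_def by (subst measure_distr[OF m1 A]) (auto intro!: arg_cong[where f="measure M"] simp: space_PiM)
    also have "\<dots> = measure (distr M ?Q (\<lambda>\<omega> i. X i \<omega>)) ({g. u n y < norm (g 0)} \<inter> space ?Q)"
      using e by simp
    also have "\<dots> = measure M {\<omega> \<in> space M. u n y < norm (X 0 \<omega>)}"
      by (subst measure_distr[OF m2 A]) (auto intro!: arg_cong[where f="measure M"] simp: space_PiM)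
    finally show ?thesis .
  qed
  have qlim: "(\<lambda>n. P n y / P n 1) \<longlonglongrightarrow> y" if y: "y > 0" for y
  proof -
    have "(\<lambda>n. (real n * P n y) / (real n * P n 1)) \<longlonglongrightarrow> y / 1"
      unfolding stat' by (intro tendsto_divide u_tail y) auto
    then have "(\<lambda>n. (real n * P n y) / (real n * P n 1)) \<longlonglongrightarrow> y" by simp
    then show ?thesis
    proof (rule Lim_transform_eventually)
      show "\<forall>\<^sub>F n in sequentially. real n * P n y / (real n * P n 1) = P n y / P n 1"
        using eventually_gt_at_top[of 0] by eventually_elim auto
    qed
  qed
  have evpos: "eventually (\<lambda>n. P n 1 > 0) sequentially"
  proof -
    have "(\<lambda>n. real n * P n 1) \<longlonglongrightarrow> 1" unfolding stat' by (intro u_tail) auto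
    from order_tendstoD(1)[OF this zero_less_one]
    show ?thesis
      by eventually_elim (auto simp: zero_less_mult_iff)
  qed
  have key: "u n \<delta> < norm (X (r n) \<omega>) \<or> (0 < W n \<omega> \<and> W n \<omega> < 1 \<and> (\<forall>y>0. y \<le> W n \<omega> \<longleftrightarrow> norm (X (r n) \<omega>) \<le> u n y))"
    if \<omega>: "\<omega> \<in> E n" and d: "\<delta> > 0" for n \<omega> \<delta>
  proof -
    have z: "u n 1 < norm (X (r n) \<omega>)" using \<omega> unfolding E_def by auto
    have z0: "norm (X (r n) \<omega>) > 0" using z u_pos[of 1 n] by linarith
    have Weq: "W n \<omega> = \<bar>uinv (u n) (norm (X (r n) \<omega>))\<bar>"
      unfolding W_def tX_def using z0 by simp
    from uinv_key[of "u n", OF u_mono u_leftcont z d]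
    show ?thesis unfolding Weq by auto
  qed
  define c where "c n x = measure M (E n \<inter> {\<omega> \<in> space M. W n \<omega> \<le> x}) / P n 1" for n x
  define \<mu> where "\<mu> n = distr (uniform_measure M (E n)) borel (W n)" for n
  have Wm'[measurable]: "W n \<in> borel_measurable (uniform_measure M (E n))" for n
    by (simp add: measurable_cong_sets[OF sets_uniform_measure refl])
  have psE: "prob_space (uniform_measure M (E n))" if "P n 1 > 0" for n
    using that unfolding PE
    by (intro prob_space_uniform_measure) (auto simp: M.emeasure_eq_measure)
  have \<mu>rd: "real_distribution (\<mu> n)" if "P n 1 > 0" for n
    unfolding real_distribution_def real_distribution_axioms_def \<mu>_def
    using prob_space.prob_space_distr[OF psE[OF that] Wm'] by simp
  have cdf\<mu>: "cdf (\<mu> n) x = c n x" if pos: "P n 1 > 0" for n x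
  proof -
    have "cdf (\<mu> n) x = measure (uniform_measure M (E n)) (W n -` {..x} \<inter> space M)"
      unfolding cdf_def2 \<mu>_def by (subst measure_distr) auto
    also have "W n -` {..x} \<inter> space M = {\<omega> \<in> space M. W n \<omega> \<le> x}" by auto
    also have "measure (uniform_measure M (E n)) {\<omega> \<in> space M. W n \<omega> \<le> x} = c n x"
      unfolding c_def PE using pos unfolding PE
      by (subst measure_uniform_measure) (auto simp: M.emeasure_eq_measure)
    finally show ?thesis .
  qed
  have c0: "0 \<le> c n x" for n x unfolding c_def P_def by (simp add: divide_nonneg_nonneg)
  have c1: "c n x \<le> 1" for n x
  proof (cases "P n 1 > 0")
    case True
    have "measure M (E n \<inter> {\<omega> \<in> space M. W n \<omega> \<le> x}) \<le> P n 1"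
      unfolding PE by (intro M.finite_measure_mono) auto
    then show ?thesis unfolding c_def using True by simp
  next
    case False
    then have "P n 1 = 0" using measure_nonneg[of M] unfolding P_def by (metis less_eq_real_def)
    then show ?thesis unfolding c_def by simp
  qed
  have upper: "c n x \<le> P n x' / P n 1 + P n \<delta> / P n 1"
    if pos: "P n 1 > 0" and xx: "x < x'" "0 < x'" and d: "0 < \<delta>" for n x x' \<delta>
  proof -
    have "E n \<inter> {\<omega> \<in> space M. W n \<omega> \<le> x} \<subseteq>
        {\<omega> \<in> space M. u n x' < norm (X (r n) \<omega>)} \<union> {\<omega> \<in> space M. u n \<delta> < norm (X (r n) \<omega>)}"
    proof
      fix \<omega> assume \<omega>: "\<omega> \<in> E n \<inter> {\<omega> \<in> space M. W n \<omega> \<le> x}"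
      then have "\<omega> \<in> E n" "\<omega> \<in> space M" "W n \<omega> \<le> x" unfolding E_def by auto
      from key[OF this(1) d] show "\<omega> \<in> {\<omega> \<in> space M. u n x' < norm (X (r n) \<omega>)} \<union> {\<omega> \<in> space M. u n \<delta> < norm (X (r n) \<omega>)}"
        using \<open>\<omega> \<in> space M\<close> \<open>W n \<omega> \<le> x\<close> xx by (auto simp: not_le[symmetric])
    qed
    then have "measure M (E n \<inter> {\<omega> \<in> space M. W n \<omega> \<le> x}) \<le>
        measure M ({\<omega> \<in> space M. u n x' < norm (X (r n) \<omega>)} \<union> {\<omega> \<in> space M. u n \<delta> < norm (X (r n) \<omega>)})"
      by (intro M.finite_measure_mono) auto
    also have "\<dots> \<le> P n x' + P n \<delta>" unfolding P_def
      by (intro measure_subadditive) (auto simp: M.emeasure_eq_measure)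
    finally show ?thesis unfolding c_def using pos by (simp add: add_divide_distrib[symmetric] divide_right_mono)
  qed
  have lower: "P n b / P n 1 - P n \<delta> / P n 1 \<le> c n x"
    if pos: "P n 1 > 0" and b: "0 < b" "b \<le> 1" "b \<le> x" and d: "0 < \<delta>" for n x b \<delta>
  proof -
    have "{\<omega> \<in> space M. u n b < norm (X (r n) \<omega>)} \<subseteq>
       (E n \<inter> {\<omega> \<in> space M. W n \<omega> \<le> x}) \<union> {\<omega> \<in> space M. u n \<delta> < norm (X (r n) \<omega>)}"
    proof
      fix \<omega> assume \<omega>: "\<omega> \<in> {\<omega> \<in> space M. u n b < norm (X (r n) \<omega>)}"
      have "u n 1 \<le> u n b" using u_mono b by auto
      then have E: "\<omega> \<in> E n" using \<omega> unfolding E_def by auto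
      from key[OF E d] show "\<omega> \<in> (E n \<inter> {\<omega> \<in> space M. W n \<omega> \<le> x}) \<union> {\<omega> \<in> space M. u n \<delta> < norm (X (r n) \<omega>)}"
        using \<omega> E b by (auto simp: not_le[symmetric])
    qed
    then have "P n b \<le> measure M ((E n \<inter> {\<omega> \<in> space M. W n \<omega> \<le> x}) \<union> {\<omega> \<in> space M. u n \<delta> < norm (X (r n) \<omega>)})"
      unfolding P_def by (intro M.finite_measure_mono) auto
    also have "\<dots> \<le> measure M (E n \<inter> {\<omega> \<in> space M. W n \<omega> \<le> x}) + P n \<delta>" unfolding P_def
      by (intro measure_subadditive) (auto simp: M.emeasure_eq_measure)
    finally show ?thesis unfolding c_def using pos by (simp add: diff_divide_distrib[symmetric] divide_right_mono)
  qed
  have Ureal: "real_distribution U"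
    unfolding U_def real_distribution_def real_distribution_axioms_def
    by (auto intro!: prob_space_uniform_measure)
  have cdfU: "cdf U x = max 0 (min x 1)" for x
  proof -
    have "cdf U x = measure lborel ({0..1} \<inter> {..x}) / measure lborel {0..(1::real)}"
      unfolding cdf_def2 U_def by (subst measure_uniform_measure) auto
    also have "\<dots> = max 0 (min x 1)"
    proof (cases "x < 0")
      case True
      then have "{0..1} \<inter> {..x} = ({}::real set)" by auto
      then show ?thesis using True by simp
    next
      case False
      then have "{0..1} \<inter> {..x} = {0..min x 1}" by auto
      then show ?thesis using False by simp
    qed
    finally show ?thesis .
  qed
  define \<mu>' where "\<mu>' n = (if P n 1 > 0 then \<mu> n else U)" for n
  have \<mu>'rd: "real_distribution (\<mu>' n)" for n
    unfolding \<mu>'_def using \<mu>rd Ureal by auto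
  have climit: "(\<lambda>n. c n x) \<longlonglongrightarrow> max 0 (min x 1)" for x
  proof (rule order_tendstoI)
    fix a assume a: "a < max 0 (min x 1)"
    show "eventually (\<lambda>n. a < c n x) sequentially"
    proof (cases "x \<le> 0")
      case True
      then have "a < 0" using a by auto
      then show ?thesis using c0 by (auto intro: less_le_trans always_eventually)
    next
      case False
      define b where "b = min x 1"
      define \<delta> where "\<delta> = (b - a) / 2"
      have b: "0 < b" "b \<le> 1" "b \<le> x" "a < b" using False a unfolding b_def by auto
      have d: "0 < \<delta>" using b unfolding \<delta>_def by auto
      have "(\<lambda>n. P n b / P n 1 - P n \<delta> / P n 1) \<longlonglongrightarrow> b - \<delta>"
        by (intro tendsto_diff qlim b d)
      moreover have "a < b - \<delta>" unfolding \<delta>_def using b by (simp add: field_simps)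
      ultimately have "eventually (\<lambda>n. a < P n b / P n 1 - P n \<delta> / P n 1) sequentially"
        by (rule order_tendstoD(1))
      then show ?thesis using evpos
        by eventually_elim (use lower[OF _ b(1-3) d] in force)
    qed
  next
    fix a assume a: "max 0 (min x 1) < a"
    show "eventually (\<lambda>n. c n x < a) sequentially"
    proof (cases "x \<ge> 1")
      case True
      then have "1 < a" using a by auto
      then show ?thesis using c1 by (auto intro: le_less_trans always_eventually)
    next
      case False
      define b where "b = max 0 x"
      define \<delta> where "\<delta> = (a - b) / 3"
      define x' where "x' = b + \<delta>"
      have b: "0 \<le> b" "x \<le> b" "b < a" using False a unfolding b_def by auto
      have d: "0 < \<delta>" "x < x'" "0 < x'" using b unfolding \<delta>_def x'_def by (auto simp: field_simps)
      have "(\<lambda>n. P n x' / P n 1 + P n \<delta> / P n 1) \<longlonglongrightarrow> x' + \<delta>"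
        by (intro tendsto_add qlim d)
      moreover have "x' + \<delta> < a" unfolding x'_def \<delta>_def using b by (simp add: field_simps)
      ultimately have "eventually (\<lambda>n. P n x' / P n 1 + P n \<delta> / P n 1 < a) sequentially"
        by (rule order_tendstoD(2))
      then show ?thesis using evpos
        by eventually_elim (use upper[OF _ d(2,3,1)] in force)
    qed
  qed
  have wc: "weak_conv_m \<mu>' U"
    unfolding weak_conv_m_def weak_conv_def
  proof (intro allI impI)
    fix x
    show "(\<lambda>n. cdf (\<mu>' n) x) \<longlonglongrightarrow> cdf U x"
      unfolding cdfU using climit
    proof (rule Lim_transform_eventually)
      show "eventually (\<lambda>n. c n x = cdf (\<mu>' n) x) sequentially"
        using evpos by eventually_elim (simp add: \<mu>'_def cdf\<mu>)
    qed
  qed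
  define L where "L = distr N borel (\<lambda>\<omega>. norm (Y 0 \<omega>))"
  have Lrd: "real_distribution L"
    unfolding real_distribution_def real_distribution_axioms_def L_def
    by (auto intro!: N.prob_space_distr)
  have Fm: "(\<lambda>\<omega> j. (1 / (1::real)) *\<^sub>R Xblock u X n (int (r n) + 0) (int (r n) + 1) \<omega> (int (r n) + j))
      \<in> borel_measurable (uniform_measure M (E n))" for n
    unfolding measurable_cong_sets[OF sets_uniform_measure refl]
    by (rule measurable_coordinatewise_then_product) (unfold Xblock_def tX_def, measurable)
  have Gm: "(\<lambda>\<omega> j. if 0 \<le> j \<and> j < (1::int) then Y j \<omega> else 0) \<in> borel_measurable N"
    by (rule measurable_coordinatewise_then_product) measurable
  have cts_cont: "continuous_on UNIV (cts_step a b)" if "a < b" for a b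
    using uniformly_continuous_imp_continuous[OF cts_step_uniformly_continuous[OF that]] .
  have cts_bd: "\<bar>cts_step a b x\<bar> \<le> 1" if "a < b" for a b x
    using that unfolding cts_step_def by (auto simp: field_simps)
  have intconv: "(\<lambda>n. \<integral>x. cts_step a b x \<partial>\<mu> n) \<longlonglongrightarrow> (\<integral>x. cts_step a b x \<partial>L)" if ab: "a < b" for a b
  proof -
    define f where "f = (\<lambda>g::int \<Rightarrow> real^'d. cts_step a b (norm (g 0)))"
    have fc: "continuous_on UNIV f" unfolding f_def
      by (rule continuous_on_compose2[OF cts_cont[OF ab]]) (auto intro!: continuous_intros)
    have fb: "bounded (range f)" unfolding bounded_real f_def using cts_bd[OF ab] by auto
    have fm[measurable]: "f \<in> borel_measurable borel" using fc by (rule borel_measurable_continuous_onI)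
    have ctsm[measurable]: "cts_step a b \<in> borel_measurable borel"
      using cts_cont[OF ab] by (rule borel_measurable_continuous_onI)
    have "(\<lambda>n. \<integral>x. f x \<partial>(distr (uniform_measure M {\<omega> \<in> space M. norm (X (r n) \<omega>) > u n 1}) borel
                 (\<lambda>\<omega> j. (1 / 1) *\<^sub>R Xblock u X n (int (r n) + 0) (int (r n) + 1) \<omega> (int (r n) + j))))
       \<longlonglongrightarrow> (\<integral>x. f x \<partial>(distr N borel (\<lambda>\<omega> j. if 0 \<le> j \<and> j < 1 then Y j \<omega> else 0)))"
      using conv[of 0 1 1] fc fb unfolding conv_in_law_def by auto
    moreover have "(\<integral>x. f x \<partial>(distr (uniform_measure M {\<omega> \<in> space M. norm (X (r n) \<omega>) > u n 1}) borel
                 (\<lambda>\<omega> j. (1 / 1) *\<^sub>R Xblock u X n (int (r n) + 0) (int (r n) + 1) \<omega> (int (r n) + j))))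
         = (\<integral>x. cts_step a b x \<partial>\<mu> n)" for n
    proof -
      have eqE: "{\<omega> \<in> space M. norm (X (r n) \<omega>) > u n 1} = E n" unfolding E_def ..
      show ?thesis unfolding eqE \<mu>_def
        by (subst integral_distr[OF Fm fm], subst integral_distr[OF Wm' ctsm])
           (simp add: f_def W_def Xblock_def)
    qed
    moreover have "(\<integral>x. f x \<partial>(distr N borel (\<lambda>\<omega> j. if 0 \<le> j \<and> j < 1 then Y j \<omega> else 0)))
       = (\<integral>x. cts_step a b x \<partial>L)"
      unfolding L_def
      by (subst integral_distr[OF Gm fm], subst integral_distr) (auto simp: f_def)
    ultimately show ?thesis by simp
  qed
  have eqint: "(\<integral>x. cts_step a b x \<partial>L) = (\<integral>x. cts_step a b x \<partial>U)" if ab: "a < b" for a b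
  proof -
    have "(\<lambda>n. \<integral>x. cts_step a b x \<partial>\<mu>' n) \<longlonglongrightarrow> (\<integral>x. cts_step a b x \<partial>U)"
      using cts_cont[OF ab] cts_bd[OF ab]
      by (intro weak_conv_imp_integral_bdd_continuous_conv[OF \<mu>'rd Ureal wc, of _ 1])
         (auto simp: continuous_on_eq_continuous_at)
    then have "(\<lambda>n. \<integral>x. cts_step a b x \<partial>\<mu> n) \<longlonglongrightarrow> (\<integral>x. cts_step a b x \<partial>U)"
    proof (rule Lim_transform_eventually)
      show "eventually (\<lambda>n. (\<integral>x. cts_step a b x \<partial>\<mu>' n) = (\<integral>x. cts_step a b x \<partial>\<mu> n)) sequentially"
        using evpos by eventually_elim (simp add: \<mu>'_def)
    qed
    from LIMSEQ_unique[OF intconv[OF ab] this] show ?thesis .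
  qed
  have wL: "weak_conv_m (\<lambda>_. L) U"
    by (rule integral_cts_step_conv_imp_weak_conv) (use Lrd Ureal eqint in auto)
  have cU: "cdf U = (\<lambda>x. max 0 (min x 1))" using cdfU by (rule ext)
  have "cdf L = cdf U"
  proof
    fix x
    have "isCont (cdf U) x" unfolding cU by (intro continuous_intros)
    then have "(\<lambda>n. cdf L x) \<longlonglongrightarrow> cdf U x" using wL unfolding weak_conv_m_def weak_conv_def by auto
    then show "cdf L x = cdf U x" by (simp add: LIMSEQ_const_iff)
  qed
  then have "L = U" by (rule cdf_unique[OF Lrd Ureal])
  then show ?thesis unfolding L_def U_def .
qed

end
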